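(* There exists an absolute constant $L$ such that for all $\omega=(\alpha^+,\alpha^-,\gamma_1,\delta)$ and $\tilde\omega=(\tilde\alpha^+,\tilde\alpha^-,\tilde\gamma_1,\tilde\delta)$ in $\hat\Omega$ and all $z\in\mathbb{C}$, $$\left|\mathsf{E}_\omega(z)-\mathsf{E}_{\tilde\omega}(z)\right|\le e^{|\gamma_1||z|+5\delta|z|^2}\left(e^{|\gamma_1-\tilde\gamma_1||z|+\frac{|\delta-\tilde\delta|}{2}|z|^2}-1\right)+|z|\left(\sum_{i\ge1}\left[|\alpha_i^+-\tilde\alpha_i^+|^3+|\alpha_i^--\tilde\alpha_i^-|^3\right]\right)^{1/3}e^{|\tilde\gamma_1||z|+\frac{\tilde\delta}{2}|z|^2+L\left(|z|(\delta^{1/2}+\tilde\delta^{1/2})+1\right)^3}.$$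
   Context: $\hat\Omega$ is the set of $(\alpha^+,\alpha^-,\gamma_1,\delta)$ with $\alpha^\pm=(\alpha_1^\pm\ge\alpha_2^\pm\ge\dots\ge0)$ non-increasing sequences of non-negative reals, $\gamma_1\in\mathbb{R}$, $\delta\ge0$, and $\sum_i(\alpha_i^+)^2+\sum_i(\alpha_i^-)^2\le\delta$. For such a point set $\gamma_2=\delta-\sum_i(\alpha_i^+)^2-\sum_i(\alpha_i^-)^2$ and $$\mathsf{E}_\omega(z)=e^{-\gamma_1 z-\frac{\gamma_2}{2}z^2}\prod_{i\ge1}e^{z\alpha_i^+}(1-z\alpha_i^+)\prod_{i\ge1}e^{-z\alpha_i^-}(1+z\alpha_i^-).$$ *)

theory Defs
  imports "HOL-Analysis.Analysis"
begin

type_synonym omega = "(nat \<Rightarrow> real) \<times> (nat \<Rightarrow> real) \<times> real \<times> real"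

text \<open>The parameter set Omega-hat: (alpha+, alpha-, gamma1, delta), sequences indexed from 0.\<close>
definition OmegaHat :: "omega set" where
  "OmegaHat = {(ap, am, g1, d).
     decseq ap \<and> decseq am \<and> (\<forall>i. ap i \<ge> 0) \<and> (\<forall>i. am i \<ge> 0) \<and> d \<ge> 0 \<and>
     summable (\<lambda>i. (ap i)\<^sup>2) \<and> summable (\<lambda>i. (am i)\<^sup>2) \<and>
     (\<Sum>i. (ap i)\<^sup>2) + (\<Sum>i. (am i)\<^sup>2) \<le> d}"

definition gamma2 :: "omega \<Rightarrow> real" where
  "gamma2 \<omega> = (case \<omega> of (ap, am, g1, d) \<Rightarrow> d - (\<Sum>i. (ap i)\<^sup>2) - (\<Sum>i. (am i)\<^sup>2))"

definition Efun :: "omega \<Rightarrow> complex \<Rightarrow> complex" where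
  "Efun \<omega> z = (case \<omega> of (ap, am, g1, d) \<Rightarrow>
     exp (- of_real g1 * z - of_real (gamma2 \<omega>) / 2 * z\<^sup>2)
     * (\<Prod>i. exp (z * of_real (ap i)) * (1 - z * of_real (ap i)))
     * (\<Prod>i. exp (- z * of_real (am i)) * (1 + z * of_real (am i))))"

end

theory Submission imports Defs begin
lemma norm_exp_sub1: fixes x :: complex shows "norm (exp x - 1) \<le> exp (norm x) - 1"
proof -
  have s1: "(\<lambda>n. x ^ Suc n /\<^sub>R fact (Suc n)) sums (exp x - 1)"
    using exp_converges[of x] by (subst sums_Suc_iff) simp
  have s2: "(\<lambda>n. norm x ^ Suc n /\<^sub>R fact (Suc n)) sums (exp (norm x) - 1)"
    using exp_converges[of "norm x"] by (subst sums_Suc_iff) simp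
  have eq: "(\<lambda>n. norm (x ^ Suc n /\<^sub>R fact (Suc n))) = (\<lambda>n. norm x ^ Suc n /\<^sub>R fact (Suc n))"
    by (simp add: norm_power norm_mult)
  have "norm (exp x - 1) = norm (\<Sum>n. x ^ Suc n /\<^sub>R fact (Suc n))"
    using s1 sums_unique by metis
  also have "\<dots> \<le> (\<Sum>n. norm (x ^ Suc n /\<^sub>R fact (Suc n)))"
    by (rule summable_norm) (use s2 eq in \<open>auto simp: sums_iff\<close>)
  also have "\<dots> = exp (norm x) - 1" using s2 eq by (simp add: sums_iff)
  finally show ?thesis .
qed

lemma L1: fixes w :: complex shows "norm (exp w * (1 - w)) \<le> exp (norm w ^ 2 / 2)"
proof -
  have sq: "(norm (1 - w))^2 = 1 - 2 * Re w + (norm w)^2"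
  proof -
    have "(norm (1 - w))^2 = (Re (1 - w))^2 + (Im (1 - w))^2" by (rule cmod_power2)
    also have "\<dots> = 1 - 2 * Re w + ((Re w)^2 + (Im w)^2)" by (simp add: power2_eq_square algebra_simps)
    also have "(Re w)^2 + (Im w)^2 = (norm w)^2" by (simp add: cmod_power2)
    finally show ?thesis .
  qed
  have "(norm (1 - w))^2 \<le> exp (- 2 * Re w + (norm w)^2)"
    unfolding sq using exp_ge_add_one_self[of "- 2 * Re w + (norm w)^2"] by (simp add: algebra_simps)
  also have "\<dots> = (exp (- Re w + (norm w)^2/2))^2"
    by (simp add: power2_eq_square exp_add[symmetric])
  finally have "norm (1 - w) \<le> exp (- Re w + (norm w)^2/2)"
    by (rule power2_le_imp_le) simp
  hence "norm (exp w * (1 - w)) \<le> exp (Re w) * exp (- Re w + (norm w)^2/2)"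
    by (simp add: norm_mult)
  also have "\<dots> = exp (norm w ^ 2 / 2)" by (simp add: exp_add[symmetric])
  finally show ?thesis .
qed

definition Gf :: "complex \<Rightarrow> complex" where
  "Gf w = exp (w + w^2/2) * (1 - w)"

lemma Gf_alt: "Gf w = exp w * (1 - w) * exp (w^2/2)"
  by (simp add: Gf_def exp_add)

lemma L2: "norm (Gf w) \<le> exp (norm w ^ 2)"
proof -
  have "norm (exp (w^2/2)) \<le> exp (norm w ^ 2 / 2)"
  proof -
    have "Re (w^2/2) \<le> norm w ^ 2 / 2"
      using complex_Re_le_cmod[of "w^2"] by (simp add: norm_power)
    thus ?thesis by simp
  qed
  moreover have "norm (Gf w) = norm (exp w * (1 - w)) * norm (exp (w^2/2))"
    unfolding Gf_alt by (rule norm_mult)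
  ultimately have "norm (Gf w) \<le> exp (norm w ^ 2 / 2) * exp (norm w ^ 2 / 2)"
    using L1[of w] by (simp add: mult_mono)
  also have "\<dots> = exp (norm w ^ 2)" by (simp add: exp_add[symmetric])
  finally show ?thesis .
qed

lemma L3: fixes w :: complex shows "norm (exp w * (1 - w) - 1) \<le> norm w ^ 2 * exp (norm w)"
proof -
  have "norm ((\<lambda>u. exp u * (1 - u)) w - (\<lambda>u. exp u * (1 - u)) 0) \<le> (norm w * exp (norm w)) * norm (w - 0)"
  proof (rule field_differentiable_bound[where S = "cball 0 (norm w)" and f' = "\<lambda>u. - u * exp u"])
    fix u :: complex assume u: "u \<in> cball 0 (norm w)"
    show "((\<lambda>u. exp u * (1 - u)) has_field_derivative - u * exp u) (at u within cball 0 (norm w))"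
      by (rule derivative_eq_intros refl | simp add: algebra_simps)+
    have "norm (- u * exp u) = norm u * exp (Re u)" by (simp add: norm_mult)
    also have "\<dots> \<le> norm w * exp (norm w)"
      using u complex_Re_le_cmod[of u] by (intro mult_mono) auto
    finally show "norm (- u * exp u) \<le> norm w * exp (norm w)" .
  qed auto
  thus ?thesis by (simp add: power2_eq_square mult_ac)
qed

lemma L4: fixes u v :: complex
  assumes "norm u \<le> R" "norm v \<le> R"
  shows "norm (Gf u - Gf v) \<le> R^2 * exp (R + R^2/2) * norm (u - v)"
proof (rule field_differentiable_bound[where S = "cball 0 R" and f' = "\<lambda>w. - (w ^ 2) * exp (w + w ^ 2 / 2)"])
  fix w :: complex assume w: "w \<in> cball 0 R"
  show "(Gf has_field_derivative - (w ^ 2) * exp (w + w ^ 2 / 2)) (at w within cball 0 R)"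
    unfolding Gf_def
    by (rule derivative_eq_intros refl | simp add: algebra_simps power2_eq_square)+
  have "Re (w + w^2/2) \<le> R + R^2/2"
  proof -
    have "Re w \<le> R" using w complex_Re_le_cmod[of w] by auto
    moreover have "Re (w^2) \<le> R^2"
    proof -
      have "norm w ^ 2 \<le> R^2" using w by (intro power_mono) auto
      thus ?thesis using complex_Re_le_cmod[of "w^2"] by (simp add: norm_power)
    qed
    ultimately show ?thesis by simp
  qed
  hence "norm (- (w ^ 2) * exp (w + w ^ 2 / 2)) \<le> norm w ^ 2 * exp (R + R^2/2)"
    by (simp add: norm_mult norm_power mult_left_mono del: plus_complex.sel)
  also have "\<dots> \<le> R^2 * exp (R + R^2/2)"
    using w by (intro mult_right_mono power_mono) auto
  finally show "norm (- (w ^ 2) * exp (w + w ^ 2 / 2)) \<le> R^2 * exp (R + R^2/2)" .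
qed (use assms in auto)

lemma prod_bound_fin: fixes a :: "nat \<Rightarrow> complex"
  assumes "\<And>i. norm (a i) \<le> exp (p i)"
  shows "norm (\<Prod>i<n. a i) \<le> exp (\<Sum>i<n. p i)"
proof -
  have "norm (\<Prod>i<n. a i) = (\<Prod>i<n. norm (a i))" by (rule prod_norm[symmetric])
  also have "\<dots> \<le> (\<Prod>i<n. exp (p i))" by (intro prod_mono) (use assms in auto)
  also have "\<dots> = exp (\<Sum>i<n. p i)" by (simp add: exp_sum)
  finally show ?thesis .
qed

lemma prod_diff_fin: fixes a b :: "nat \<Rightarrow> complex"
  assumes "\<And>i. norm (a i) \<le> exp (p i)" "\<And>i. norm (b i) \<le> exp (q i)"
    "\<And>i. p i \<ge> 0" "\<And>i. q i \<ge> 0"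
  shows "norm ((\<Prod>i<n. a i) - (\<Prod>i<n. b i)) \<le> exp (\<Sum>i<n. p i + q i) * (\<Sum>i<n. norm (a i - b i))"
proof (induction n)
  case 0 then show ?case by simp
next
  case (Suc n)
  let ?A = "\<Prod>i<n. a i" and ?B = "\<Prod>i<n. b i"
  let ?E = "exp (\<Sum>i<n. p i + q i)" and ?D = "\<Sum>i<n. norm (a i - b i)"
  have e: "(\<Prod>i<Suc n. a i) - (\<Prod>i<Suc n. b i) = (?A - ?B) * a n + ?B * (a n - b n)"
    by (simp add: algebra_simps)
  have nB: "norm ?B \<le> exp (\<Sum>i<n. q i)" by (rule prod_bound_fin) (rule assms(2))
  have E0: "?E \<ge> 0" by simp
  have "norm ((?A - ?B) * a n) \<le> (?E * ?D) * exp (p n)"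
    unfolding norm_mult by (intro mult_mono Suc assms) (auto intro!: sum_nonneg mult_nonneg_nonneg)
  also have "\<dots> \<le> (?E * ?D) * exp (p n + q n)"
    using assms(4)[of n] by (intro mult_left_mono) (auto intro!: mult_nonneg_nonneg sum_nonneg)
  finally have t1: "norm ((?A - ?B) * a n) \<le> exp (\<Sum>i<Suc n. p i + q i) * ?D"
    by (simp only: sum.lessThan_Suc exp_add mult_ac)
  have "norm (?B * (a n - b n)) \<le> exp (\<Sum>i<n. q i) * norm (a n - b n)"
    unfolding norm_mult by (intro mult_right_mono nB) auto
  also have "\<dots> \<le> exp (\<Sum>i<Suc n. p i + q i) * norm (a n - b n)"
  proof -
    have "(\<Sum>i<n. q i) \<le> (\<Sum>i<Suc n. p i + q i)"
      using assms(3,4) by (simp add: sum.distrib add_increasing sum_nonneg)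
    thus ?thesis by (intro mult_right_mono) auto
  qed
  finally have t2: "norm (?B * (a n - b n)) \<le> exp (\<Sum>i<Suc n. p i + q i) * norm (a n - b n)" .
  have "norm ((\<Prod>i<Suc n. a i) - (\<Prod>i<Suc n. b i)) \<le> norm ((?A - ?B) * a n) + norm (?B * (a n - b n))"
    unfolding e by (rule norm_triangle_ineq)
  also have "\<dots> \<le> exp (\<Sum>i<Suc n. p i + q i) * (\<Sum>i<Suc n. norm (a i - b i))"
    using t1 t2 by (simp add: algebra_simps)
  finally show ?case .
qed

lemma prod_bound_inf: fixes a :: "nat \<Rightarrow> complex"
  assumes "a has_prod A" "\<And>i. norm (a i) \<le> exp (p i)" "summable p" "\<And>i. p i \<ge> 0"
  shows "norm A \<le> exp (suminf p)"
proof (rule LIMSEQ_le_const2)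
  show "(\<lambda>n. norm (\<Prod>i<n. a i)) \<longlonglongrightarrow> norm A"
    by (intro tendsto_norm has_prod_imp_tendsto' assms)
  show "\<exists>N. \<forall>n\<ge>N. norm (\<Prod>i<n. a i) \<le> exp (suminf p)"
  proof (intro exI allI impI)
    fix n :: nat
    have "norm (\<Prod>i<n. a i) \<le> exp (\<Sum>i<n. p i)" by (rule prod_bound_fin) (rule assms)
    also have "\<dots> \<le> exp (suminf p)" using assms by (simp add: sum_le_suminf)
    finally show "norm (\<Prod>i<n. a i) \<le> exp (suminf p)" .
  qed
qed

lemma prod_diff_inf: fixes a b :: "nat \<Rightarrow> complex"
  assumes "a has_prod A" "b has_prod B"
    "\<And>i. norm (a i) \<le> exp (p i)" "\<And>i. norm (b i) \<le> exp (q i)"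
    "\<And>i. p i \<ge> 0" "\<And>i. q i \<ge> 0" "summable p" "summable q"
    "\<And>i. norm (a i - b i) \<le> c i" "summable c"
  shows "norm (A - B) \<le> exp (suminf p + suminf q) * suminf c"
proof (rule LIMSEQ_le_const2)
  show "(\<lambda>n. norm ((\<Prod>i<n. a i) - (\<Prod>i<n. b i))) \<longlonglongrightarrow> norm (A - B)"
    by (intro tendsto_norm tendsto_diff has_prod_imp_tendsto' assms)
  show "\<exists>N. \<forall>n\<ge>N. norm ((\<Prod>i<n. a i) - (\<Prod>i<n. b i)) \<le> exp (suminf p + suminf q) * suminf c"
  proof (intro exI allI impI)
    fix n :: nat
    have c0: "\<And>i. c i \<ge> 0" using assms(9) order_trans norm_ge_zero by blast
    have "norm ((\<Prod>i<n. a i) - (\<Prod>i<n. b i)) \<le> exp (\<Sum>i<n. p i + q i) * (\<Sum>i<n. norm (a i - b i))"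
      by (rule prod_diff_fin) (use assms in auto)
    also have "\<dots> \<le> exp (suminf p + suminf q) * suminf c"
    proof (intro mult_mono)
      have "(\<Sum>i<n. p i + q i) = (\<Sum>i<n. p i) + (\<Sum>i<n. q i)" by (simp add: sum.distrib)
      also have "\<dots> \<le> suminf p + suminf q" using assms by (intro add_mono sum_le_suminf) auto
      finally show "exp (\<Sum>i<n. p i + q i) \<le> exp (suminf p + suminf q)" by simp
      have "(\<Sum>i<n. norm (a i - b i)) \<le> (\<Sum>i<n. c i)" by (intro sum_mono assms)
      also have "\<dots> \<le> suminf c" using assms c0 by (intro sum_le_suminf) auto
      finally show "(\<Sum>i<n. norm (a i - b i)) \<le> suminf c" .
    qed (auto intro: sum_nonneg)
    finally show "norm ((\<Prod>i<n. a i) - (\<Prod>i<n. b i)) \<le> exp (suminf p + suminf q) * suminf c" .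
  qed
qed


lemma seq_rep:
  fixes a :: "nat \<Rightarrow> real" and c :: complex
  assumes a0: "\<And>i. a i \<ge> 0" and aM: "\<And>i. a i \<le> M" and sa: "summable (\<lambda>i. (a i)^2)"
  shows "(\<lambda>i. exp (c * of_real (a i)) * (1 - c * of_real (a i))) has_prod
           prodinf (\<lambda>i. exp (c * of_real (a i)) * (1 - c * of_real (a i)))"
    and "(\<lambda>i. Gf (c * of_real (a i))) has_prod
           (prodinf (\<lambda>i. exp (c * of_real (a i)) * (1 - c * of_real (a i)))
           * exp (c^2 / 2 * of_real (\<Sum>i. (a i)^2)))"
proof -
  let ?f = "\<lambda>i. exp (c * of_real (a i)) * (1 - c * of_real (a i))"
  have M0: "M \<ge> 0" using a0[of 0] aM[of 0] by linarith
  have "summable (\<lambda>i. norm (?f i - 1))"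
  proof (rule summable_comparison_test')
    show "summable (\<lambda>i. (norm c ^ 2 * exp (norm c * M)) * (a i)^2)"
      by (intro summable_mult sa)
    fix i
    have "norm (norm (?f i - 1)) \<le> norm (c * of_real (a i)) ^ 2 * exp (norm (c * of_real (a i)))"
      using L3[of "c * of_real (a i)"] by simp
    also have "\<dots> = (norm c ^ 2 * (a i)^2) * exp (norm c * a i)"
      using a0[of i] by (simp add: norm_mult power_mult_distrib)
    also have "\<dots> \<le> (norm c ^ 2 * (a i)^2) * exp (norm c * M)"
      using aM[of i] by (intro mult_left_mono) (auto intro: mult_left_mono)
    finally show "norm (norm (?f i - 1)) \<le> (norm c ^ 2 * exp (norm c * M)) * (a i)^2"
      by (simp add: mult_ac)
  qed
  hence "convergent_prod ?f"
    by (intro abs_convergent_prod_imp_convergent_prod summable_imp_abs_convergent_prod)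
  thus hf: "?f has_prod prodinf ?f" by (rule convergent_prod_has_prod)
  have "(\<lambda>i. of_real ((a i)^2) :: complex) sums of_real (\<Sum>i. (a i)^2)"
    using sa by (intro sums_of_real) (simp add: summable_sums)
  hence "(\<lambda>i. c^2/2 * of_real ((a i)^2)) sums (c^2/2 * of_real (\<Sum>i. (a i)^2))"
    by (rule sums_mult)
  hence "(\<lambda>i. exp (c^2/2 * of_real ((a i)^2))) has_prod exp (c^2/2 * of_real (\<Sum>i. (a i)^2))"
    unfolding has_prod_def by (intro disjI1 sums_imp_has_prod_exp)
  from has_prod_mult[OF hf this]
  have "(\<lambda>i. ?f i * exp (c^2/2 * of_real ((a i)^2))) has_prod
          (prodinf ?f * exp (c^2/2 * of_real (\<Sum>i. (a i)^2)))" .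
  moreover have "\<And>i. ?f i * exp (c^2/2 * of_real ((a i)^2)) = Gf (c * of_real (a i))"
    by (simp add: Gf_alt power_mult_distrib)
  ultimately show "(\<lambda>i. Gf (c * of_real (a i))) has_prod
           (prodinf ?f * exp (c^2 / 2 * of_real (\<Sum>i. (a i)^2)))" by simp
qed

lemma seq_bound:
  fixes a :: "nat \<Rightarrow> real" and c :: complex
  assumes sa: "summable (\<lambda>i. (a i)^2)" and hp: "(\<lambda>i. Gf (c * of_real (a i))) has_prod P"
  shows "norm P \<le> exp (norm c ^ 2 * (\<Sum>i. (a i)^2))"
proof -
  have "norm P \<le> exp (\<Sum>i. norm c ^ 2 * (a i)^2)"
  proof (rule prod_bound_inf[OF hp])
    fix i show "norm (Gf (c * of_real (a i))) \<le> exp (norm c ^ 2 * (a i)^2)"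
      using L2[of "c * of_real (a i)"] by (simp add: norm_mult power_mult_distrib)
  qed (use sa in auto)
  thus ?thesis using sa by (simp add: suminf_mult)
qed

lemma seq_diff:
  fixes a b :: "nat \<Rightarrow> real" and c :: complex
  assumes a0: "\<And>i. a i \<ge> 0" and b0: "\<And>i. b i \<ge> 0"
    and sa: "summable (\<lambda>i. (a i)^2)" and sb: "summable (\<lambda>i. (b i)^2)"
    and ha: "(\<lambda>i. Gf (c * of_real (a i))) has_prod Pa"
    and hb: "(\<lambda>i. Gf (c * of_real (b i))) has_prod Pb"
    and sab: "\<And>i. \<bar>a i - b i\<bar> \<le> s"
    and Ta: "\<And>i. norm c * a i \<le> T" and Tb: "\<And>i. norm c * b i \<le> T"
  shows "norm (Pa - Pb) \<le> exp (norm c ^ 2 * ((\<Sum>i. (a i)^2) + (\<Sum>i. (b i)^2)))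
           * ((norm c * s * exp (T + T^2/2) * norm c ^ 2) * ((\<Sum>i. (a i)^2) + (\<Sum>i. (b i)^2)))"
proof -
  let ?K = "norm c * s * exp (T + T^2/2) * norm c ^ 2"
  have s0: "s \<ge> 0" using sab[of 0] by linarith
  have K0: "?K \<ge> 0" using s0 by simp
  have "norm (Pa - Pb) \<le> exp ((\<Sum>i. norm c ^ 2 * (a i)^2) + (\<Sum>i. norm c ^ 2 * (b i)^2))
          * (\<Sum>i. ?K * ((a i)^2 + (b i)^2))"
  proof (rule prod_diff_inf[OF ha hb])
    fix i
    show "norm (Gf (c * of_real (a i))) \<le> exp (norm c ^ 2 * (a i)^2)"
      using L2[of "c * of_real (a i)"] by (simp add: norm_mult power_mult_distrib)
    show "norm (Gf (c * of_real (b i))) \<le> exp (norm c ^ 2 * (b i)^2)"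
      using L2[of "c * of_real (b i)"] by (simp add: norm_mult power_mult_distrib)
    define R where "R = norm c * max (a i) (b i)"
    have R0: "R \<ge> 0" unfolding R_def using a0[of i] by auto
    have RT: "R \<le> T" unfolding R_def using Ta[of i] Tb[of i] by (auto simp: max_def)
    have Ra: "norm (c * of_real (a i)) \<le> R" unfolding R_def using a0[of i]
      by (auto simp: norm_mult intro: mult_left_mono)
    have Rb: "norm (c * of_real (b i)) \<le> R" unfolding R_def using b0[of i]
      by (auto simp: norm_mult intro: mult_left_mono)
    have R2: "R^2 \<le> norm c ^ 2 * ((a i)^2 + (b i)^2)"
      unfolding R_def using a0[of i] b0[of i]
      by (auto simp: max_def power_mult_distrib intro!: mult_left_mono)
    have "norm (Gf (c * of_real (a i)) - Gf (c * of_real (b i)))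
          \<le> R^2 * exp (R + R^2/2) * norm (c * of_real (a i) - c * of_real (b i))"
      by (rule L4[OF Ra Rb])
    also have "norm (c * of_real (a i) - c * of_real (b i)) = norm c * \<bar>a i - b i\<bar>"
    proof -
      have "c * of_real (a i) - c * of_real (b i) = c * of_real (a i - b i)" by (simp add: algebra_simps)
      thus ?thesis by (simp only: norm_mult norm_of_real)
    qed
    also have "R^2 * exp (R + R^2/2) * (norm c * \<bar>a i - b i\<bar>)
          \<le> (norm c ^ 2 * ((a i)^2 + (b i)^2)) * exp (T + T^2/2) * (norm c * s)"
    proof (intro mult_mono R2 mult_left_mono sab)
      show "exp (R + R^2/2) \<le> exp (T + T^2/2)" using R0 RT by (simp add: power_mono add_mono)
    qed auto
    also have "\<dots> = ?K * ((a i)^2 + (b i)^2)" by (simp add: mult_ac)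
    finally show "norm (Gf (c * of_real (a i)) - Gf (c * of_real (b i))) \<le> ?K * ((a i)^2 + (b i)^2)" .
  qed (use sa sb in \<open>auto intro: summable_mult summable_add\<close>)
  also have "\<dots> = exp (norm c ^ 2 * ((\<Sum>i. (a i)^2) + (\<Sum>i. (b i)^2)))
           * (?K * ((\<Sum>i. (a i)^2) + (\<Sum>i. (b i)^2)))"
  proof -
    have e1: "(\<Sum>i. ?K * ((a i)^2 + (b i)^2)) = ?K * ((\<Sum>i. (a i)^2) + (\<Sum>i. (b i)^2))"
      by (simp only: suminf_mult[OF summable_add[OF sa sb]] suminf_add[OF sa sb])
    have e2: "(\<Sum>i. norm c ^ 2 * (a i)^2) + (\<Sum>i. norm c ^ 2 * (b i)^2)
        = norm c ^ 2 * ((\<Sum>i. (a i)^2) + (\<Sum>i. (b i)^2))"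
      by (simp only: suminf_mult[OF sa] suminf_mult[OF sb] distrib_left)
    show ?thesis by (simp only: e1 e2)
  qed
  finally show ?thesis .
qed

lemma OmegaHat_facts:
  assumes "(ap, am, g1, d) \<in> OmegaHat"
  shows "\<And>i. ap i \<ge> 0" "\<And>i. am i \<ge> 0" "\<And>i. ap i \<le> ap 0" "\<And>i. am i \<le> am 0"
    "summable (\<lambda>i. (ap i)^2)" "summable (\<lambda>i. (am i)^2)"
    "(\<Sum>i. (ap i)^2) + (\<Sum>i. (am i)^2) \<le> d" "d \<ge> 0"
    "(\<Sum>i. (ap i)^2) \<ge> 0" "(\<Sum>i. (am i)^2) \<ge> 0"
    "\<And>i. ap i \<le> sqrt d" "\<And>i. am i \<le> sqrt d"
proof -
  note A = assms[unfolded OmegaHat_def, simplified]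
  show ap0: "\<And>i. ap i \<ge> 0" "\<And>i. am i \<ge> 0" using A by auto
  show "\<And>i. ap i \<le> ap 0" "\<And>i. am i \<le> am 0" using A by (auto simp: decseq_def)
  show sp: "summable (\<lambda>i. (ap i)^2)" and sm: "summable (\<lambda>i. (am i)^2)" using A by auto
  show le: "(\<Sum>i. (ap i)^2) + (\<Sum>i. (am i)^2) \<le> d" "d \<ge> 0" using A by auto
  show n1: "(\<Sum>i. (ap i)^2) \<ge> 0" and n2: "(\<Sum>i. (am i)^2) \<ge> 0"
    by (intro suminf_nonneg sp sm zero_le_power2)+
  fix i
  have "(ap i)^2 \<le> (\<Sum>i. (ap i)^2)" using sum_le_suminf[OF sp, of "{i}"] by simp
  thus "ap i \<le> sqrt d" using le n2 by (intro real_le_rsqrt) linarith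
  have "(am i)^2 \<le> (\<Sum>i. (am i)^2)" using sum_le_suminf[OF sm, of "{i}"] by simp
  thus "am i \<le> sqrt d" using le n1 by (intro real_le_rsqrt) linarith
qed

lemma Efun_rep:
  assumes H: "(ap, am, g1, d) \<in> OmegaHat"
  shows "\<exists>Pp Pm. (\<lambda>i. Gf (z * of_real (ap i))) has_prod Pp
              \<and> (\<lambda>i. Gf ((- z) * of_real (am i))) has_prod Pm
              \<and> Efun (ap, am, g1, d) z = exp (- of_real g1 * z - of_real d / 2 * z^2) * Pp * Pm"
proof -
  note F = OmegaHat_facts[OF H]
  define Sp where "Sp = (\<Sum>i. (ap i)^2)"
  define Sm where "Sm = (\<Sum>i. (am i)^2)"
  define Qp where "Qp = prodinf (\<lambda>i. exp (z * of_real (ap i)) * (1 - z * of_real (ap i)))"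
  define Qm where "Qm = prodinf (\<lambda>i. exp ((-z) * of_real (am i)) * (1 - (-z) * of_real (am i)))"
  have hp: "(\<lambda>i. Gf (z * of_real (ap i))) has_prod (Qp * exp (z^2/2 * of_real Sp))"
    unfolding Qp_def Sp_def by (rule seq_rep(2)[OF F(1) F(3) F(5)])
  have hm: "(\<lambda>i. Gf ((-z) * of_real (am i))) has_prod (Qm * exp ((-z)^2/2 * of_real Sm))"
    unfolding Qm_def Sm_def by (rule seq_rep(2)[OF F(2) F(4) F(6)])
  have Qm': "prodinf (\<lambda>i. exp (- (z * of_real (am i))) * (1 + z * of_real (am i))) = Qm"
    unfolding Qm_def by simp
  have X: "- of_real g1 * z - of_real (d - Sp - Sm) / 2 * z^2
      = (- of_real g1 * z - of_real d / 2 * z^2) + z^2/2 * of_real Sp + (-z)^2/2 * of_real Sm"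
    by (simp add: field_simps)
  have "Efun (ap, am, g1, d) z = exp (- of_real g1 * z - of_real (d - Sp - Sm) / 2 * z^2) * Qp * Qm"
    unfolding Efun_def gamma2_def by (simp add: Sp_def Sm_def Qp_def Qm')
  also have "\<dots> = exp (- of_real g1 * z - of_real d / 2 * z^2) * (Qp * exp (z^2/2 * of_real Sp))
        * (Qm * exp ((-z)^2/2 * of_real Sm))"
    unfolding X exp_add by (simp add: mult_ac)
  finally show ?thesis using hp hm by blast
qed

lemma cube_summable:
  fixes a b :: "nat \<Rightarrow> real"
  assumes "\<And>i. a i \<ge> 0" "\<And>i. b i \<ge> 0" "\<And>i. a i \<le> B" "\<And>i. b i \<le> B"
    "summable (\<lambda>i. (a i)^2)" "summable (\<lambda>i. (b i)^2)"
  shows "summable (\<lambda>i. \<bar>a i - b i\<bar> ^ 3)"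
proof (rule summable_comparison_test')
  show "summable (\<lambda>i. (2 * B) * ((a i)^2 + (b i)^2))"
    using assms by (intro summable_mult summable_add)
  fix i
  have ab: "\<bar>a i - b i\<bar> \<le> B" using assms(1-4)[of i] by linarith
  have sq: "(a i - b i)^2 \<le> 2 * ((a i)^2 + (b i)^2)"
    using zero_le_power2[of "a i + b i"] by (simp add: power2_eq_square algebra_simps)
  have "\<bar>a i - b i\<bar> ^ 3 = \<bar>a i - b i\<bar> * (a i - b i)^2"
    by (simp add: power2_eq_square power3_eq_cube abs_mult_self_eq)
  also have "\<dots> \<le> B * (2 * ((a i)^2 + (b i)^2))"
    using ab sq by (intro mult_mono) auto
  finally show "norm (\<bar>a i - b i\<bar> ^ 3) \<le> (2 * B) * ((a i)^2 + (b i)^2)" by (simp add: mult_ac)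
qed

lemma le_cuberoot:
  fixes x S :: real
  assumes "0 \<le> x" "x ^ 3 \<le> S"
  shows "x \<le> S powr (1/3)"
proof -
  have S0: "S \<ge> 0" using assms order_trans zero_le_power by blast
  have "x = root 3 (x ^ 3)" using assms by (simp add: real_root_power_cancel)
  also have "\<dots> \<le> root 3 S" using assms by simp
  also have "\<dots> = S powr (1/3)" using S0 by (simp add: root_powr_inverse)
  finally show ?thesis .
qed

lemma arith_final:
  fixes Y T :: real
  assumes "0 \<le> Y" "Y \<le> T^2" "0 \<le> T"
  shows "exp Y * exp (T + T^2/2) * Y \<le> exp ((T + 1)^3)"
proof -
  have "Y \<le> exp Y" using exp_ge_add_one_self[of Y] by linarith
  hence "exp Y * exp (T + T^2/2) * Y \<le> exp Y * exp (T + T^2/2) * exp Y"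
    by (intro mult_left_mono) auto
  also have "\<dots> = exp (2 * Y + T + T^2/2)" by (simp add: exp_add[symmetric])
  also have "\<dots> \<le> exp ((T + 1)^3)"
  proof -
    have "0 \<le> T * (T * T)" "0 \<le> T * T" using assms by auto
    moreover have "(T+1)^3 = T*(T*T) + 3*(T*T) + 3*T + 1" by (simp add: power3_eq_cube algebra_simps)
    moreover have "T^2 = T * T" by (simp add: power2_eq_square)
    ultimately have "2 * Y + T + T^2/2 \<le> (T + 1)^3" using assms by linarith
    thus ?thesis by simp
  qed
  finally show ?thesis .
qed

theorem proposition5p1:
  shows "\<exists>L::real. \<forall>ap am g1 d ap' am' g1' d' (z::complex).
     (ap, am, g1, d) \<in> OmegaHat \<longrightarrow> (ap', am', g1', d') \<in> OmegaHat \<longrightarrow>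
     cmod (Efun (ap, am, g1, d) z - Efun (ap', am', g1', d') z)
       \<le> exp (\<bar>g1\<bar> * cmod z + 5 * d * (cmod z)\<^sup>2)
           * (exp (\<bar>g1 - g1'\<bar> * cmod z + \<bar>d - d'\<bar> / 2 * (cmod z)\<^sup>2) - 1)
         + cmod z * ((\<Sum>i. \<bar>ap i - ap' i\<bar> ^ 3 + \<bar>am i - am' i\<bar> ^ 3) powr (1/3))
           * exp (\<bar>g1'\<bar> * cmod z + d' / 2 * (cmod z)\<^sup>2
                  + L * (cmod z * (sqrt d + sqrt d') + 1) ^ 3)"
proof (intro exI[of _ "1::real"] allI impI)
  fix ap am g1 d ap' am' g1' d' and z :: complex
  assume H: "(ap, am, g1, d) \<in> OmegaHat" and H': "(ap', am', g1', d') \<in> OmegaHat"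
  note F = OmegaHat_facts[OF H] and F' = OmegaHat_facts[OF H']
  obtain Pp Pm where hp: "(\<lambda>i. Gf (z * of_real (ap i))) has_prod Pp"
      and hm: "(\<lambda>i. Gf ((- z) * of_real (am i))) has_prod Pm"
      and eE: "Efun (ap, am, g1, d) z = exp (- of_real g1 * z - of_real d / 2 * z^2) * Pp * Pm"
    using Efun_rep[OF H, of z] by blast
  obtain Pp' Pm' where hp': "(\<lambda>i. Gf (z * of_real (ap' i))) has_prod Pp'"
      and hm': "(\<lambda>i. Gf ((- z) * of_real (am' i))) has_prod Pm'"
      and eE': "Efun (ap', am', g1', d') z = exp (- of_real g1' * z - of_real d' / 2 * z^2) * Pp' * Pm'"
    using Efun_rep[OF H', of z] by blast
  define r where "r = cmod z"
  define Sp where "Sp = (\<Sum>i. (ap i)^2)"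
  define Sm where "Sm = (\<Sum>i. (am i)^2)"
  define Sp' where "Sp' = (\<Sum>i. (ap' i)^2)"
  define Sm' where "Sm' = (\<Sum>i. (am' i)^2)"
  define T where "T = r * (sqrt d + sqrt d')"
  define S3 where "S3 = (\<Sum>i. \<bar>ap i - ap' i\<bar> ^ 3 + \<bar>am i - am' i\<bar> ^ 3)"
  define s where "s = S3 powr (1/3)"
  define A where "A = - of_real g1 * z - of_real d / 2 * z^2"
  define A' where "A' = - of_real g1' * z - of_real d' / 2 * z^2"
  define K where "K = r * s * exp (T + T^2/2) * r^2"
  have r0: "r \<ge> 0" unfolding r_def by simp
  have d0: "d \<ge> 0" and d0': "d' \<ge> 0" using F F' by auto
  have T0: "T \<ge> 0" unfolding T_def using r0 d0 d0' by simp
  have sum_d: "Sp + Sm \<le> d" and sum_d': "Sp' + Sm' \<le> d'"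
    unfolding Sp_def Sm_def Sp'_def Sm'_def using F F' by auto
  have Sp0: "Sp \<ge> 0" and Sm0: "Sm \<ge> 0" and Sp0': "Sp' \<ge> 0" and Sm0': "Sm' \<ge> 0"
    unfolding Sp_def Sm_def Sp'_def Sm'_def using F F' by auto
  have B1: "\<And>i. ap i \<le> sqrt d + sqrt d'" "\<And>i. ap' i \<le> sqrt d + sqrt d'"
       "\<And>i. am i \<le> sqrt d + sqrt d'" "\<And>i. am' i \<le> sqrt d + sqrt d'"
  proof -
    fix i
    have "sqrt d \<ge> 0" "sqrt d' \<ge> 0" using d0 d0' by auto
    thus "ap i \<le> sqrt d + sqrt d'" "ap' i \<le> sqrt d + sqrt d'"
         "am i \<le> sqrt d + sqrt d'" "am' i \<le> sqrt d + sqrt d'"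
      using F(11)[of i] F(12)[of i] F'(11)[of i] F'(12)[of i] by linarith+
  qed
  have sc1: "summable (\<lambda>i. \<bar>ap i - ap' i\<bar> ^ 3)"
    by (rule cube_summable[OF F(1) F'(1) B1(1) B1(2) F(5) F'(5)])
  have sc2: "summable (\<lambda>i. \<bar>am i - am' i\<bar> ^ 3)"
    by (rule cube_summable[OF F(2) F'(2) B1(3) B1(4) F(6) F'(6)])
  have sc: "summable (\<lambda>i. \<bar>ap i - ap' i\<bar> ^ 3 + \<bar>am i - am' i\<bar> ^ 3)"
    by (rule summable_add[OF sc1 sc2])
  have single: "\<bar>ap i - ap' i\<bar> ^ 3 + \<bar>am i - am' i\<bar> ^ 3 \<le> S3" for i
    unfolding S3_def using sum_le_suminf[OF sc, of "{i}"] by simp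
  have sp_le: "\<bar>ap i - ap' i\<bar> \<le> s" for i
  proof -
    have "0 \<le> \<bar>am i - am' i\<bar> ^ 3" by simp
    hence "\<bar>ap i - ap' i\<bar> ^ 3 \<le> S3" using single[of i] by linarith
    thus ?thesis unfolding s_def by (intro le_cuberoot) auto
  qed
  have sm_le: "\<bar>am i - am' i\<bar> \<le> s" for i
  proof -
    have "0 \<le> \<bar>ap i - ap' i\<bar> ^ 3" by simp
    hence "\<bar>am i - am' i\<bar> ^ 3 \<le> S3" using single[of i] by linarith
    thus ?thesis unfolding s_def by (intro le_cuberoot) auto
  qed
  have s0: "s \<ge> 0" unfolding s_def by simp
  have Tb: "\<And>x. x \<le> sqrt d + sqrt d' \<Longrightarrow> r * x \<le> T"
    unfolding T_def using r0 by (intro mult_left_mono) auto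
  have bPp: "norm Pp \<le> exp (r^2 * Sp)" using seq_bound[OF F(5) hp] by (simp add: r_def Sp_def)
  have bPm: "norm Pm \<le> exp (r^2 * Sm)" using seq_bound[OF F(6) hm] by (simp add: r_def Sm_def)
  have bPp': "norm Pp' \<le> exp (r^2 * Sp')" using seq_bound[OF F'(5) hp'] by (simp add: r_def Sp'_def)
  have dP: "norm (Pp - Pp') \<le> exp (r^2 * (Sp + Sp')) * (K * (Sp + Sp'))"
    using seq_diff[OF F(1) F'(1) F(5) F'(5) hp hp' sp_le, of T]
      Tb[OF B1(1)] Tb[OF B1(2)]
    by (simp add: r_def Sp_def Sp'_def K_def)
  have dM: "norm (Pm - Pm') \<le> exp (r^2 * (Sm + Sm')) * (K * (Sm + Sm'))"
    using seq_diff[OF F(2) F'(2) F(6) F'(6) hm hm' sm_le, of T]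
      Tb[OF B1(3)] Tb[OF B1(4)]
    by (simp add: r_def Sm_def Sm'_def K_def)
  have K0: "K \<ge> 0" unfolding K_def using r0 s0 by simp
  define Dl where "Dl = \<bar>g1 - g1'\<bar> * r + \<bar>d - d'\<bar> / 2 * r^2"
  have nA: "norm A \<le> \<bar>g1\<bar> * r + d / 2 * r^2"
  proof -
    have "norm A \<le> norm (- of_real g1 * z) + norm (of_real d / 2 * z^2)"
      unfolding A_def by (rule norm_triangle_ineq4)
    also have "\<dots> = \<bar>g1\<bar> * r + d / 2 * r^2"
      using d0 by (simp add: r_def norm_mult norm_power norm_divide)
    finally show ?thesis .
  qed
  have nA': "norm A' \<le> \<bar>g1'\<bar> * r + d' / 2 * r^2"
  proof -
    have "norm A' \<le> norm (- of_real g1' * z) + norm (of_real d' / 2 * z^2)"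
      unfolding A'_def by (rule norm_triangle_ineq4)
    also have "\<dots> = \<bar>g1'\<bar> * r + d' / 2 * r^2"
      using d0' by (simp add: r_def norm_mult norm_power norm_divide)
    finally show ?thesis .
  qed
  have nexpA: "norm (exp A) \<le> exp (\<bar>g1\<bar> * r + d / 2 * r^2)"
    using complex_Re_le_cmod[of A] nA by simp
  have nexpA': "norm (exp A') \<le> exp (\<bar>g1'\<bar> * r + d' / 2 * r^2)"
    using complex_Re_le_cmod[of A'] nA' by simp
  have nu: "norm (A' - A) \<le> Dl"
  proof -
    have eqAA: "A' - A = of_real (g1 - g1') * z + of_real (d - d') / 2 * z^2"
      unfolding A_def A'_def by (simp add: field_simps)
    have "norm (A' - A) \<le> norm (of_real (g1 - g1') * z) + norm (of_real (d - d') / 2 * z^2)"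
      unfolding eqAA by (rule norm_triangle_ineq)
    also have "\<dots> = Dl" by (simp add: Dl_def r_def norm_mult norm_power norm_divide del: of_real_diff)
    finally show ?thesis .
  qed
  have ediff: "exp A - exp A' = exp A * (1 - exp (A' - A))"
    by (simp add: algebra_simps exp_add[symmetric])
  have n1e: "norm (1 - exp (A' - A)) \<le> exp Dl - 1"
  proof -
    have "norm (1 - exp (A' - A)) = norm (exp (A' - A) - 1)" by (rule norm_minus_commute)
    also have "\<dots> \<le> exp (norm (A' - A)) - 1" by (rule norm_exp_sub1)
    also have "\<dots> \<le> exp Dl - 1" using nu by simp
    finally show ?thesis .
  qed
  have nPP: "norm (Pp * Pm) \<le> exp (r^2 * d)"
  proof -
    have "norm (Pp * Pm) \<le> exp (r^2 * Sp) * exp (r^2 * Sm)"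
      unfolding norm_mult by (intro mult_mono bPp bPm) auto
    also have "\<dots> = exp (r^2 * (Sp + Sm))" by (simp add: exp_add[symmetric] distrib_left)
    also have "\<dots> \<le> exp (r^2 * d)" using sum_d by (simp add: mult_left_mono)
    finally show ?thesis .
  qed
  have Dl1: "exp Dl - 1 \<ge> 0" unfolding Dl_def using r0 by simp
  have N1: "norm ((exp A - exp A') * (Pp * Pm)) \<le> exp (\<bar>g1\<bar> * r + 5 * d * r^2) * (exp Dl - 1)"
  proof -
    have "norm ((exp A - exp A') * (Pp * Pm))
        = norm (exp A) * norm (1 - exp (A' - A)) * norm (Pp * Pm)"
      unfolding ediff by (simp add: norm_mult)
    also have "\<dots> \<le> exp (\<bar>g1\<bar> * r + d / 2 * r^2) * (exp Dl - 1) * exp (r^2 * d)"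
      using Dl1 by (intro mult_mono nexpA n1e nPP) (auto intro: mult_nonneg_nonneg)
    also have "\<dots> = exp (\<bar>g1\<bar> * r + d / 2 * r^2 + r^2 * d) * (exp Dl - 1)"
      by (simp only: exp_add mult_ac)
    also have "\<dots> \<le> exp (\<bar>g1\<bar> * r + 5 * d * r^2) * (exp Dl - 1)"
    proof (intro mult_right_mono)
      have "d * r^2 \<ge> 0" using d0 by simp
      thus "exp (\<bar>g1\<bar> * r + d / 2 * r^2 + r^2 * d) \<le> exp (\<bar>g1\<bar> * r + 5 * d * r^2)"
        by (simp add: algebra_simps)
      have "Dl \<ge> 0" unfolding Dl_def using r0 by simp
      thus "0 \<le> exp Dl - 1" by simp
    qed
    finally show ?thesis .
  qed
  define Y where "Y = r^2 * (d + d')"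
  have Y0: "Y \<ge> 0" unfolding Y_def using d0 d0' by simp
  have YT: "Y \<le> T^2"
  proof -
    have "d + d' \<le> (sqrt d + sqrt d')^2"
      using d0 d0' by (simp add: power2_eq_square algebra_simps real_sqrt_mult_self)
    hence "r^2 * (d + d') \<le> r^2 * (sqrt d + sqrt d')^2" by (simp add: mult_left_mono)
    thus ?thesis unfolding Y_def T_def by (simp add: power_mult_distrib)
  qed
  have NPd: "norm (Pp * Pm - Pp' * Pm') \<le> exp Y * K * (d + d')"
  proof -
    have e: "Pp * Pm - Pp' * Pm' = (Pp - Pp') * Pm + Pp' * (Pm - Pm')" by (simp add: algebra_simps)
    have "norm (Pp * Pm - Pp' * Pm') \<le> norm (Pp - Pp') * norm Pm + norm Pp' * norm (Pm - Pm')"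
      unfolding e by (rule order_trans[OF norm_triangle_ineq]) (simp add: norm_mult)
    also have "\<dots> \<le> exp (r^2 * (Sp + Sp')) * (K * (Sp + Sp')) * exp (r^2 * Sm)
                  + exp (r^2 * Sp') * (exp (r^2 * (Sm + Sm')) * (K * (Sm + Sm')))"
      using K0 Sp0 Sp0' Sm0 Sm0'
      by (intro add_mono mult_mono dP bPm bPp' dM) (auto intro!: mult_nonneg_nonneg)
    also have "\<dots> = exp (r^2 * (Sp + Sp' + Sm)) * K * (Sp + Sp')
                  + exp (r^2 * (Sp' + Sm + Sm')) * K * (Sm + Sm')"
      by (simp add: exp_add[symmetric] algebra_simps)
    also have "\<dots> \<le> exp Y * K * (Sp + Sp') + exp Y * K * (Sm + Sm')"
    proof (intro add_mono mult_right_mono)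
      have "r^2 * (Sp + Sp' + Sm) \<le> Y" unfolding Y_def
        using sum_d sum_d' Sm0' by (intro mult_left_mono) auto
      thus "exp (r^2 * (Sp + Sp' + Sm)) \<le> exp Y" by simp
      have "r^2 * (Sp' + Sm + Sm') \<le> Y" unfolding Y_def
        using sum_d sum_d' Sp0 by (intro mult_left_mono) auto
      thus "exp (r^2 * (Sp' + Sm + Sm')) \<le> exp Y" by simp
    qed (use K0 Sp0 Sp0' Sm0 Sm0' in auto)
    also have "\<dots> = exp Y * K * (Sp + Sp' + Sm + Sm')" by (simp add: algebra_simps)
    also have "\<dots> \<le> exp Y * K * (d + d')"
      using sum_d sum_d' K0 by (intro mult_left_mono) auto
    finally show ?thesis .
  qed
  have KY: "exp Y * K * (d + d') = (r * s) * (exp Y * exp (T + T^2/2) * Y)"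
    unfolding K_def Y_def by (simp add: algebra_simps)
  have NPd2: "exp Y * K * (d + d') \<le> (r * s) * exp ((T + 1)^3)"
    unfolding KY using arith_final[OF Y0 YT T0] r0 s0 by (intro mult_left_mono) auto
  have N2: "norm (exp A' * (Pp * Pm - Pp' * Pm'))
      \<le> (r * s) * exp (\<bar>g1'\<bar> * r + d' / 2 * r^2 + 1 * (T + 1)^3)"
  proof -
    have "norm (exp A' * (Pp * Pm - Pp' * Pm')) \<le> exp (\<bar>g1'\<bar> * r + d' / 2 * r^2) * ((r * s) * exp ((T + 1)^3))"
      unfolding norm_mult using NPd NPd2 by (intro mult_mono nexpA') auto
    also have "\<dots> = (r * s) * exp (\<bar>g1'\<bar> * r + d' / 2 * r^2 + 1 * (T + 1)^3)"
      by (simp add: exp_add mult_ac)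
    finally show ?thesis .
  qed
  have main: "Efun (ap, am, g1, d) z - Efun (ap', am', g1', d') z
      = (exp A - exp A') * (Pp * Pm) + exp A' * (Pp * Pm - Pp' * Pm')"
    unfolding eE eE' A_def A'_def by (simp add: algebra_simps)
  have "cmod (Efun (ap, am, g1, d) z - Efun (ap', am', g1', d') z)
      \<le> norm ((exp A - exp A') * (Pp * Pm)) + norm (exp A' * (Pp * Pm - Pp' * Pm'))"
    unfolding main by (rule norm_triangle_ineq)
  also have "\<dots> \<le> exp (\<bar>g1\<bar> * r + 5 * d * r^2) * (exp Dl - 1)
      + (r * s) * exp (\<bar>g1'\<bar> * r + d' / 2 * r^2 + 1 * (T + 1)^3)"
    by (rule add_mono[OF N1 N2])
  finally show "cmod (Efun (ap, am, g1, d) z - Efun (ap', am', g1', d') z)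
       \<le> exp (\<bar>g1\<bar> * cmod z + 5 * d * (cmod z)\<^sup>2)
           * (exp (\<bar>g1 - g1'\<bar> * cmod z + \<bar>d - d'\<bar> / 2 * (cmod z)\<^sup>2) - 1)
         + cmod z * ((\<Sum>i. \<bar>ap i - ap' i\<bar> ^ 3 + \<bar>am i - am' i\<bar> ^ 3) powr (1/3))
           * exp (\<bar>g1'\<bar> * cmod z + d' / 2 * (cmod z)\<^sup>2
                  + 1 * (cmod z * (sqrt d + sqrt d') + 1) ^ 3)"
    unfolding r_def s_def S3_def Dl_def T_def .
qed

end
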